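(* Let $k\in\mathbb{N}$ and let $(E,d_E)$ be a properly $\mathsf{M}_k$-separated Bratteli diagram with $E^0=\bigsqcup_{n\ge1}V_n$, $V_n=H_n\sqcup\{y_n\}$, and $H=\bigsqcup_nH_n$. Let $G$ be the graph constructed from $(E,d_E)$ as follows. For $v\in H_n$ put $\delta(v)=d_E(v)-\sum_{e\in r_E^{-1}(v)}d_E(s_E(e))-1$, and $m(v)=|y_{n-1}E^*v|$ if $n\ge2$, $m(v)=0$ if $n=1$. Then $G^0=H\sqcup\{z_1,\dots,z_k\}\sqcup\{x_i^v: v\in H,1\le i\le\delta(v)\}$ and $G^1=\{e\in E^1: s_E(e)\in H\}\sqcup\{e_1,\dots,e_{k-1}\}\sqcup\{f_i^v: v\in H,1\le i\le m(v)\}\sqcup\{g_i^v: v\in H,1\le i\le\delta(v)\}$, where edges of $E$ keep their source and range, $e_i$ goes from $z_i$ to $z_k$, $f_i^v$ goes from $z_k$ to $v$, and $g_i^v$ goes from $x_i^v$ to $v$. Then for every $v\in H$, $d_E(v)=|\{\alpha\in G^*: r_G(\alpha)=v\}|$, where $G^*$ is the set of finite paths of $G$ (including vertices as paths of length $0$).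
   Context: A Bratteli diagram $(E,d_E)$ consists of a graph $E=(E^0,E^1,r_E,s_E)$ and $d_E\colon E^0\to\mathbb{N}$ such that $E$ has no sinks, $E^0=\bigsqcup_{n\ge1}W_n$ (levels) with each $W_n$ finite, each edge goes from some $W_n$ to $W_{n+1}$, and $d_E(v)\ge\sum_{e\in r_E^{-1}(v)}d_E(s_E(e))$. With $E^*$ the finite paths and $VE^*W$ the paths from set $V$ to set $W$ ($vE^*w$ for single vertices): $(E,d_E)$ is $\mathsf{M}_k$-separated if (1) $W_n=H_n\sqcup\{y_n\}$; (2) $H_nE^*y_{n+1}=\emptyset$; (3) $d_E(y_n)=k$; (4) $|y_nE^*y_{n+1}|=1$; (5) $y_nE^*H_{n+1}\ne\emptyset$, for all $n$; properly $\mathsf{M}_k$-separated if moreover (6) $d_E(v)>\sum_{e\in r_E^{-1}(v)}d_E(s_E(e))$ for all $n$ and $v\in H_n$. *)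

theory Defs
  imports Main
begin

text \<open>A finite path is either a vertex (length 0) or a nonempty list of edges
  e_1 ... e_m with s(e_i) = r(e_(i+1)) (so r(path) = r(e_1), s(path) = s(e_m)).\<close>

datatype ('v, 'e) fpath = Vtx 'v | Edges "'e list"

definition fpaths :: "'v set \<Rightarrow> 'e set \<Rightarrow> ('e \<Rightarrow> 'v) \<Rightarrow> ('e \<Rightarrow> 'v) \<Rightarrow> ('v, 'e) fpath set" where
  "fpaths V0 E1 s r =
     Vtx ` V0 \<union>
     {Edges es | es. es \<noteq> [] \<and> set es \<subseteq> E1 \<and>
        (\<forall>i. Suc i < length es \<longrightarrow> s (es ! i) = r (es ! Suc i))}"

fun path_src :: "('e \<Rightarrow> 'v) \<Rightarrow> ('v, 'e) fpath \<Rightarrow> 'v" where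
  "path_src s (Vtx v) = v"
| "path_src s (Edges es) = s (last es)"

fun path_rng :: "('e \<Rightarrow> 'v) \<Rightarrow> ('v, 'e) fpath \<Rightarrow> 'v" where
  "path_rng r (Vtx v) = v"
| "path_rng r (Edges es) = r (hd es)"

definition paths_from_to :: "'v set \<Rightarrow> 'e set \<Rightarrow> ('e \<Rightarrow> 'v) \<Rightarrow> ('e \<Rightarrow> 'v) \<Rightarrow> 'v \<Rightarrow> 'v \<Rightarrow> ('v, 'e) fpath set" where
  "paths_from_to V0 E1 s r v w = {\<alpha> \<in> fpaths V0 E1 s r. path_src s \<alpha> = v \<and> path_rng r \<alpha> = w}"

text \<open>Levels are W n for n \<ge> 1 (W 0 is irrelevant).\<close>
definition bratteli_diagram ::
  "'v set \<Rightarrow> 'e set \<Rightarrow> ('e \<Rightarrow> 'v) \<Rightarrow> ('e \<Rightarrow> 'v) \<Rightarrow> ('v \<Rightarrow> nat) \<Rightarrow> (nat \<Rightarrow> 'v set) \<Rightarrow> bool" where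
  "bratteli_diagram V0 E1 s r d W \<longleftrightarrow>
     (\<forall>e\<in>E1. s e \<in> V0 \<and> r e \<in> V0) \<and>
     (\<forall>v\<in>V0. \<exists>e\<in>E1. s e = v) \<and>
     V0 = (\<Union>n\<in>{1..}. W n) \<and>
     (\<forall>n m. 1 \<le> n \<longrightarrow> 1 \<le> m \<longrightarrow> n \<noteq> m \<longrightarrow> W n \<inter> W m = {}) \<and>
     (\<forall>n\<ge>1. finite (W n)) \<and>
     (\<forall>e\<in>E1. \<exists>n\<ge>1. s e \<in> W n \<and> r e \<in> W (Suc n)) \<and>
     (\<forall>v\<in>V0. finite {e\<in>E1. r e = v}) \<and>
     (\<forall>v\<in>V0. (\<Sum>e\<in>{e\<in>E1. r e = v}. d (s e)) \<le> d v)"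

definition Mk_separated ::
  "'v set \<Rightarrow> 'e set \<Rightarrow> ('e \<Rightarrow> 'v) \<Rightarrow> ('e \<Rightarrow> 'v) \<Rightarrow> ('v \<Rightarrow> nat) \<Rightarrow> (nat \<Rightarrow> 'v set)
    \<Rightarrow> nat \<Rightarrow> (nat \<Rightarrow> 'v set) \<Rightarrow> (nat \<Rightarrow> 'v) \<Rightarrow> bool" where
  "Mk_separated V0 E1 s r d W k H y \<longleftrightarrow>
     bratteli_diagram V0 E1 s r d W \<and>
     (\<forall>n\<ge>1.
        W n = H n \<union> {y n} \<and> y n \<notin> H n \<and>
        (\<forall>v\<in>H n. paths_from_to V0 E1 s r v (y (Suc n)) = {}) \<and>
        d (y n) = k \<and>
        card (paths_from_to V0 E1 s r (y n) (y (Suc n))) = 1 \<and>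
        (\<exists>w\<in>H (Suc n). paths_from_to V0 E1 s r (y n) w \<noteq> {}))"

definition properly_Mk_separated ::
  "'v set \<Rightarrow> 'e set \<Rightarrow> ('e \<Rightarrow> 'v) \<Rightarrow> ('e \<Rightarrow> 'v) \<Rightarrow> ('v \<Rightarrow> nat) \<Rightarrow> (nat \<Rightarrow> 'v set)
    \<Rightarrow> nat \<Rightarrow> (nat \<Rightarrow> 'v set) \<Rightarrow> (nat \<Rightarrow> 'v) \<Rightarrow> bool" where
  "properly_Mk_separated V0 E1 s r d W k H y \<longleftrightarrow>
     Mk_separated V0 E1 s r d W k H y \<and>
     (\<forall>n\<ge>1. \<forall>v\<in>H n. (\<Sum>e\<in>{e\<in>E1. r e = v}. d (s e)) < d v)"

datatype 'v gvert = GV 'v | Zv nat | Xv 'v nat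
datatype ('v, 'e) gedge = GE 'e | Ed nat | Fe 'v nat | Ge 'v nat

definition Hall :: "(nat \<Rightarrow> 'v set) \<Rightarrow> 'v set" where
  "Hall H = (\<Union>n\<in>{1..}. H n)"

definition delta :: "'e set \<Rightarrow> ('e \<Rightarrow> 'v) \<Rightarrow> ('e \<Rightarrow> 'v) \<Rightarrow> ('v \<Rightarrow> nat) \<Rightarrow> 'v \<Rightarrow> nat" where
  "delta E1 s r d v = d v - (\<Sum>e\<in>{e\<in>E1. r e = v}. d (s e)) - 1"

definition G0 :: "'v set \<Rightarrow> 'e set \<Rightarrow> ('e \<Rightarrow> 'v) \<Rightarrow> ('e \<Rightarrow> 'v) \<Rightarrow> ('v \<Rightarrow> nat)
    \<Rightarrow> nat \<Rightarrow> (nat \<Rightarrow> 'v set) \<Rightarrow> (nat \<Rightarrow> 'v) \<Rightarrow> 'v gvert set" where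
  "G0 V0 E1 s r d k H y =
     GV ` Hall H \<union> Zv ` {1..k} \<union>
     {Xv v i | v i. v \<in> Hall H \<and> 1 \<le> i \<and> i \<le> delta E1 s r d v}"

text \<open>m(v) = |y_(n-1) E* v| for v in H_n, n \<ge> 2, and m(v) = 0 for v in H_1.\<close>
definition G1 :: "'v set \<Rightarrow> 'e set \<Rightarrow> ('e \<Rightarrow> 'v) \<Rightarrow> ('e \<Rightarrow> 'v) \<Rightarrow> ('v \<Rightarrow> nat)
    \<Rightarrow> nat \<Rightarrow> (nat \<Rightarrow> 'v set) \<Rightarrow> (nat \<Rightarrow> 'v) \<Rightarrow> ('v, 'e) gedge set" where
  "G1 V0 E1 s r d k H y =
     GE ` {e\<in>E1. s e \<in> Hall H} \<union> Ed ` {1..k - 1} \<union>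
     {Fe v i | v i n. 2 \<le> n \<and> v \<in> H n \<and> 1 \<le> i \<and>
                     i \<le> card (paths_from_to V0 E1 s r (y (n - 1)) v)} \<union>
     {Ge v i | v i. v \<in> Hall H \<and> 1 \<le> i \<and> i \<le> delta E1 s r d v}"

fun sG :: "('e \<Rightarrow> 'v) \<Rightarrow> nat \<Rightarrow> ('v, 'e) gedge \<Rightarrow> 'v gvert" where
  "sG s k (GE e) = GV (s e)"
| "sG s k (Ed i) = Zv i"
| "sG s k (Fe v i) = Zv k"
| "sG s k (Ge v i) = Xv v i"

fun rG :: "('e \<Rightarrow> 'v) \<Rightarrow> nat \<Rightarrow> ('v, 'e) gedge \<Rightarrow> 'v gvert" where
  "rG r k (GE e) = GV (r e)"
| "rG r k (Ed i) = Zv k"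
| "rG r k (Fe v i) = GV v"
| "rG r k (Ge v i) = GV v"

end

theory Submission imports Defs begin

definition Qs :: "'e set \<Rightarrow> ('e\<Rightarrow>'v) \<Rightarrow> ('e\<Rightarrow>'v) \<Rightarrow> 'v \<Rightarrow> 'e list set" where
"Qs E1 s r u = {es. es \<noteq> [] \<and> set es \<subseteq> E1 \<and> (\<forall>i. Suc i < length es \<longrightarrow> s (es!i) = r (es!Suc i)) \<and> r (hd es) = u}"

lemma chain_Cons:
  "(\<forall>i. Suc i < length (e#es) \<longrightarrow> s ((e#es)!i) = r ((e#es)!Suc i)) \<longleftrightarrow>
   (es \<noteq> [] \<longrightarrow> s e = r (hd es)) \<and> (\<forall>i. Suc i < length es \<longrightarrow> s (es!i) = r (es!Suc i))"
proof
  assume h: "\<forall>i. Suc i < length (e#es) \<longrightarrow> s ((e#es)!i) = r ((e#es)!Suc i)"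
  show "(es \<noteq> [] \<longrightarrow> s e = r (hd es)) \<and> (\<forall>i. Suc i < length es \<longrightarrow> s (es!i) = r (es!Suc i))"
  proof (intro conjI allI impI)
    assume "es \<noteq> []" then show "s e = r (hd es)" using h[rule_format, of 0] by (simp add: hd_conv_nth)
  next
    fix i assume "Suc i < length es" then show "s (es!i) = r (es!Suc i)" using h[rule_format, of "Suc i"] by simp
  qed
next
  assume h: "(es \<noteq> [] \<longrightarrow> s e = r (hd es)) \<and> (\<forall>i. Suc i < length es \<longrightarrow> s (es!i) = r (es!Suc i))"
  show "\<forall>i. Suc i < length (e#es) \<longrightarrow> s ((e#es)!i) = r ((e#es)!Suc i)"
  proof (intro allI impI)
    fix i assume i: "Suc i < length (e#es)"
    show "s ((e#es)!i) = r ((e#es)!Suc i)"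
    proof (cases i)
      case 0 then show ?thesis using h i by (simp add: hd_conv_nth)
    next
      case (Suc j) then show ?thesis using h i by simp
    qed
  qed
qed

lemma Qs_rec: "Qs E1 s r u = (\<Union>e\<in>{e\<in>E1. r e = u}. (#) e ` ({[]} \<union> Qs E1 s r (s e)))"
proof
  show "Qs E1 s r u \<subseteq> (\<Union>e\<in>{e\<in>E1. r e = u}. (#) e ` ({[]} \<union> Qs E1 s r (s e)))"
  proof
    fix es assume "es \<in> Qs E1 s r u"
    then obtain e es' where es: "es = e # es'" and h: "set (e#es') \<subseteq> E1"
      "\<forall>i. Suc i < length (e#es') \<longrightarrow> s ((e#es')!i) = r ((e#es')!Suc i)" "r e = u"
      unfolding Qs_def by (cases es) auto
    then show "es \<in> (\<Union>e\<in>{e\<in>E1. r e = u}. (#) e ` ({[]} \<union> Qs E1 s r (s e)))"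
      unfolding chain_Cons by (cases "es' = []") (auto simp: Qs_def)
  qed
next
  show "(\<Union>e\<in>{e\<in>E1. r e = u}. (#) e ` ({[]} \<union> Qs E1 s r (s e))) \<subseteq> Qs E1 s r u"
  proof (rule UN_least)
    fix e assume e: "e \<in> {e\<in>E1. r e = u}"
    show "(#) e ` ({[]} \<union> Qs E1 s r (s e)) \<subseteq> Qs E1 s r u"
    proof
      fix x assume "x \<in> (#) e ` ({[]} \<union> Qs E1 s r (s e))"
      then obtain es where x: "x = e # es" and es: "es = [] \<or> es \<in> Qs E1 s r (s e)" by auto
      have "\<forall>i. Suc i < length (e#es) \<longrightarrow> s ((e#es)!i) = r ((e#es)!Suc i)"
        unfolding chain_Cons using es by (auto simp: Qs_def)
      then show "x \<in> Qs E1 s r u" using es e x by (auto simp: Qs_def)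
    qed
  qed
qed

lemma Qs_card:
  assumes "finite {e\<in>E1. r e = u}" "\<And>e. e\<in>E1 \<Longrightarrow> r e = u \<Longrightarrow> finite (Qs E1 s r (s e))"
  shows "finite (Qs E1 s r u) \<and> card (Qs E1 s r u) = (\<Sum>e\<in>{e\<in>E1. r e = u}. Suc (card (Qs E1 s r (s e))))"
proof -
  have fin: "finite (Qs E1 s r u)" unfolding Qs_rec[of E1 s r u] using assms by auto
  have "card (Qs E1 s r u) = (\<Sum>e\<in>{e\<in>E1. r e = u}. card ((#) e ` ({[]} \<union> Qs E1 s r (s e))))"
    unfolding Qs_rec[of E1 s r u] using assms by (subst card_UN_disjoint) auto
  also have "\<dots> = (\<Sum>e\<in>{e\<in>E1. r e = u}. Suc (card (Qs E1 s r (s e))))"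
  proof (rule sum.cong[OF refl])
    fix e assume "e \<in> {e\<in>E1. r e = u}"
    then have f: "finite (Qs E1 s r (s e))" using assms by auto
    have "[] \<notin> Qs E1 s r (s e)" by (simp add: Qs_def)
    then show "card ((#) e ` ({[]} \<union> Qs E1 s r (s e))) = Suc (card (Qs E1 s r (s e)))"
      using f by (subst card_image) auto
  qed
  finally show ?thesis using fin by simp
qed

lemma Qs_empty: "{e\<in>E1. r e = u} = {} \<Longrightarrow> Qs E1 s r u = {}"
  by (subst Qs_rec) auto

lemma fpaths_rng: "{\<alpha> \<in> fpaths V0 E1 s r. path_rng r \<alpha> = u} = Vtx ` ({u} \<inter> V0) \<union> Edges ` Qs E1 s r u"
  apply (auto simp: fpaths_def Qs_def)
  done

lemma card_fpaths_rng: "finite (Qs E1 s r u) \<Longrightarrow> u \<in> V0 \<Longrightarrow>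
   card {\<alpha> \<in> fpaths V0 E1 s r. path_rng r \<alpha> = u} = Suc (card (Qs E1 s r u))"
  unfolding fpaths_rng by (subst card_Un_disjoint) (auto simp: card_image inj_on_def)


lemma level_unique: "bratteli_diagram V0 E1 s r d W \<Longrightarrow> x \<in> W a \<Longrightarrow> x \<in> W b \<Longrightarrow> 1 \<le> a \<Longrightarrow> 1 \<le> b \<Longrightarrow> a = b"
  unfolding bratteli_diagram_def by blast

lemma edge_level: assumes "bratteli_diagram V0 E1 s r d W" "e \<in> E1" "r e \<in> W n" "1 \<le> n"
  shows "2 \<le> n \<and> s e \<in> W (n - 1)"
proof -
  obtain m where m: "m \<ge> 1" "s e \<in> W m" "r e \<in> W (Suc m)" using assms unfolding bratteli_diagram_def by blast
  have "Suc m = n" using level_unique[OF assms(1) m(3) assms(3)] assms m by simp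
  then show ?thesis using m by auto
qed

lemma path_level: assumes B: "bratteli_diagram V0 E1 s r d W"
  shows "es \<noteq> [] \<Longrightarrow> set es \<subseteq> E1 \<Longrightarrow> (\<forall>i. Suc i < length es \<longrightarrow> s (es!i) = r (es!Suc i)) \<Longrightarrow>
    r (hd es) \<in> W a \<Longrightarrow> 1 \<le> a \<Longrightarrow> s (last es) \<in> W b \<Longrightarrow> 1 \<le> b \<Longrightarrow> a = b + length es"
proof (induction es arbitrary: a)
  case Nil then show ?case by simp
next
  case (Cons e es)
  have el: "2 \<le> a \<and> s e \<in> W (a - 1)" using edge_level[OF B, of e a] Cons.prems by auto
  show ?case
  proof (cases "es = []")
    case True
    then have "a - 1 = b" using level_unique[OF B, of "s e" "a - 1" b] el Cons.prems by auto
    then show ?thesis using True el by auto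
  next
    case False
    have ch: "s e = r (hd es)" "\<forall>i. Suc i < length es \<longrightarrow> s (es!i) = r (es!Suc i)"
      using Cons.prems(3) False unfolding chain_Cons by auto
    have "a - 1 = b + length es"
      using Cons.IH[OF False _ ch(2), of "a - 1"] Cons.prems el ch(1) False by auto
    then show ?thesis using el by auto
  qed
qed

lemma count_paths: assumes B: "bratteli_diagram V0 E1 s r d W" and "2 \<le> n" "v \<in> W n" "w \<in> W (n - 1)"
  shows "card (paths_from_to V0 E1 s r w v) = card {e\<in>E1. r e = v \<and> s e = w}"
proof -
  have "paths_from_to V0 E1 s r w v = (\<lambda>e. Edges [e]) ` {e\<in>E1. r e = v \<and> s e = w}"
  proof
    show "paths_from_to V0 E1 s r w v \<subseteq> (\<lambda>e. Edges [e]) ` {e\<in>E1. r e = v \<and> s e = w}"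
    proof
      fix \<alpha> assume a: "\<alpha> \<in> paths_from_to V0 E1 s r w v"
      show "\<alpha> \<in> (\<lambda>e. Edges [e]) ` {e\<in>E1. r e = v \<and> s e = w}"
      proof (cases \<alpha>)
        case (Vtx u)
        then have "u = w" "u = v" using a by (auto simp: paths_from_to_def)
        then have "n = n - 1" using level_unique[OF B, of v n "n - 1"] assms by auto
        then show ?thesis using assms by simp
      next
        case (Edges es)
        then have h: "es \<noteq> []" "set es \<subseteq> E1" "\<forall>i. Suc i < length es \<longrightarrow> s (es!i) = r (es!Suc i)"
          "s (last es) = w" "r (hd es) = v"
          using a by (auto simp: paths_from_to_def fpaths_def)
        have "n = (n - 1) + length es" using path_level[OF B h(1-3), of n "n - 1"] h assms by auto
        then have "length es = 1" using assms by simp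
        then obtain e where "es = [e]" by (cases es) auto
        then show ?thesis using h Edges by auto
      qed
    qed
  next
    show "(\<lambda>e. Edges [e]) ` {e\<in>E1. r e = v \<and> s e = w} \<subseteq> paths_from_to V0 E1 s r w v"
      by (auto simp: paths_from_to_def fpaths_def)
  qed
  then show ?thesis by (simp add: card_image inj_on_def)
qed


theorem lemma5p5:
  fixes V0 :: "'v set" and E1 :: "'e set" and s r :: "'e \<Rightarrow> 'v"
    and d :: "'v \<Rightarrow> nat" and W H :: "nat \<Rightarrow> 'v set" and y :: "nat \<Rightarrow> 'v" and k :: nat
  assumes "1 \<le> k"
    and "properly_Mk_separated V0 E1 s r d W k H y"
  shows "\<forall>v\<in>Hall H. d v =
           card {\<alpha> \<in> fpaths (G0 V0 E1 s r d k H y) (G1 V0 E1 s r d k H y) (sG s k) (rG r k).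
                   path_rng (rG r k) \<alpha> = GV v}"
proof -
  define GG where "GG = G1 V0 E1 s r d k H y"
  define Q where "Q = Qs GG (sG s k) (rG r k)"
  have B: "bratteli_diagram V0 E1 s r d W"
    using assms(2) unfolding properly_Mk_separated_def Mk_separated_def by blast
  have Mk: "\<And>n. 1 \<le> n \<Longrightarrow> W n = H n \<union> {y n} \<and> y n \<notin> H n \<and> d (y n) = k"
    using assms(2) unfolding properly_Mk_separated_def Mk_separated_def by blast
  have propr: "\<And>n v. 1 \<le> n \<Longrightarrow> v \<in> H n \<Longrightarrow> (\<Sum>e\<in>{e\<in>E1. r e = v}. d (s e)) < d v"
    using assms(2) unfolding properly_Mk_separated_def by blast
  have V0: "\<And>n. 1 \<le> n \<Longrightarrow> W n \<subseteq> V0" using B unfolding bratteli_diagram_def by blast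
  have finr: "\<And>v. v \<in> V0 \<Longrightarrow> finite {e\<in>E1. r e = v}" using B unfolding bratteli_diagram_def by blast
  have yH: "\<And>n. 1 \<le> n \<Longrightarrow> y n \<notin> Hall H"
  proof
    fix n assume n: "1 \<le> n" and "y n \<in> Hall H"
    then obtain m where m: "m \<ge> 1" "y n \<in> H m" unfolding Hall_def by auto
    then have "m = n" using level_unique[OF B, of "y n" m n] Mk[OF n] Mk[OF m(1)] n by auto
    then show False using m Mk[OF n] by simp
  qed
  have QX: "\<And>v i. Q (Xv v i) = {}" unfolding Q_def
    by (rule Qs_empty) (auto simp: GG_def G1_def)
  have QZ: "\<And>j. j \<noteq> k \<Longrightarrow> Q (Zv j) = {}" unfolding Q_def
    by (rule Qs_empty) (auto simp: GG_def G1_def)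
  have inZ: "{g\<in>GG. rG r k g = Zv k} = Ed ` {1..k-1}"
    by (auto simp: GG_def G1_def)
  have QZk: "finite (Q (Zv k)) \<and> card (Q (Zv k)) = k - 1"
  proof -
    have "finite (Q (Zv k)) \<and> card (Q (Zv k)) = (\<Sum>g\<in>{g\<in>GG. rG r k g = Zv k}. Suc (card (Q (sG s k g))))"
    proof -
      have "\<And>g. g \<in> GG \<Longrightarrow> rG r k g = Zv k \<Longrightarrow> Q (sG s k g) = {}"
      proof -
        fix g assume "g \<in> GG" "rG r k g = Zv k"
        then obtain j where "g = Ed j" "j \<in> {1..k-1}" using inZ by blast
        then show "Q (sG s k g) = {}" using QZ[of j] by auto
      qed
      then show ?thesis unfolding Q_def by (intro Qs_card) (auto simp: inZ Q_def)
    qed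
    moreover have "(\<Sum>g\<in>{g\<in>GG. rG r k g = Zv k}. Suc (card (Q (sG s k g)))) = k - 1"
    proof -
      have "(\<Sum>x\<in>{1..k-1}. Suc (card (Q (Zv x)))) = (\<Sum>x\<in>{1..k-1}. 1)"
        by (rule sum.cong) (auto simp: QZ)
      then show ?thesis unfolding inZ by (subst sum.reindex) (auto simp: inj_on_def)
    qed
    ultimately show ?thesis by simp
  qed
  have main: "\<forall>v\<in>H n. 1 \<le> n \<longrightarrow> finite (Q (GV v)) \<and> Suc (card (Q (GV v))) = d v" for n
  proof (induction n rule: less_induct)
    case (less n)
    show ?case
    proof (intro ballI impI)
      fix v assume v: "v \<in> H n" and n: "1 \<le> n"
      have vW: "v \<in> W n" using Mk[OF n] v by auto
      define m where "m = (if 2 \<le> n then card (paths_from_to V0 E1 s r (y (n - 1)) v) else 0)"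
      define A where "A = {e\<in>E1. s e \<in> Hall H \<and> r e = v}"
      define Bs where "Bs = {e\<in>E1. r e = v \<and> s e = y (n - 1)}"
      define \<delta> where "\<delta> = delta E1 s r d v"
      have vHall: "v \<in> Hall H" using v n unfolding Hall_def by auto
      have Fe_iff: "Fe v i \<in> GG \<longleftrightarrow> 1 \<le> i \<and> i \<le> m" for i
      proof
        assume "Fe v i \<in> GG"
        then obtain n' where n': "2 \<le> n'" "v \<in> H n'" "1 \<le> i" "i \<le> card (paths_from_to V0 E1 s r (y (n' - 1)) v)"
          by (auto simp: GG_def G1_def)
        then have "n' = n" using level_unique[OF B, of v n' n] Mk[of n'] vW n by auto
        then show "1 \<le> i \<and> i \<le> m" using n' by (simp add: m_def)
      next
        assume "1 \<le> i \<and> i \<le> m"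
        then show "Fe v i \<in> GG" using v by (auto simp: GG_def G1_def m_def split: if_splits)
      qed
      have inV: "{g\<in>GG. rG r k g = GV v} = GE ` A \<union> (Fe v ` {1..m} \<union> Ge v ` {1..\<delta>})"
      proof -
        have "\<And>g. g \<in> GG \<Longrightarrow> rG r k g = GV v \<Longrightarrow> g \<in> GE ` A \<union> (Fe v ` {1..m} \<union> Ge v ` {1..\<delta>})"
        proof -
          fix g assume g: "g \<in> GG" "rG r k g = GV v"
          show "g \<in> GE ` A \<union> (Fe v ` {1..m} \<union> Ge v ` {1..\<delta>})"
          proof (cases g)
            case (GE e) then show ?thesis using g by (auto simp: GG_def G1_def A_def)
          next
            case (Ed j) then show ?thesis using g by simp
          next
            case (Fe w i) then show ?thesis using g Fe_iff by auto
          next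
            case (Ge w i) then show ?thesis using g by (auto simp: GG_def G1_def \<delta>_def)
          qed
        qed
        moreover have "GE ` A \<union> (Fe v ` {1..m} \<union> Ge v ` {1..\<delta>}) \<subseteq> {g\<in>GG. rG r k g = GV v}"
        proof -
          have "GE ` A \<subseteq> {g\<in>GG. rG r k g = GV v}" unfolding GG_def G1_def A_def by force
          moreover have "Fe v ` {1..m} \<subseteq> {g\<in>GG. rG r k g = GV v}"
          proof
            fix g :: "('v,'e) gedge" assume "g \<in> Fe v ` {1..m}"
            then obtain i where "g = Fe v i" "1 \<le> i" "i \<le> m" by auto
            then show "g \<in> {g\<in>GG. rG r k g = GV v}" using Fe_iff[of i] by simp
          qed
          moreover have "Ge v ` {1..\<delta>} \<subseteq> {g\<in>GG. rG r k g = GV v}"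
            using vHall by (auto simp: GG_def G1_def \<delta>_def)
          ultimately show ?thesis by blast
        qed
        ultimately show ?thesis by blast
      qed
      have finA: "finite A" using finr[of v] V0[OF n] vW unfolding A_def by (auto intro: rev_finite_subset)
      have IHA: "e \<in> A \<Longrightarrow> finite (Q (GV (s e))) \<and> Suc (card (Q (GV (s e)))) = d (s e)" for e
      proof -
        assume e: "e \<in> A"
        then obtain n' where n': "1 \<le> n'" "s e \<in> H n'" unfolding A_def Hall_def by auto
        have el: "2 \<le> n \<and> s e \<in> W (n - 1)" using edge_level[OF B, of e n] e vW n unfolding A_def by auto
        have "n' = n - 1" using level_unique[OF B, of "s e" n' "n - 1"] Mk[OF n'(1)] n' el by auto
        then show ?thesis using less.IH[of n'] n' el by auto
      qed
      have fins: "g \<in> GG \<Longrightarrow> rG r k g = GV v \<Longrightarrow> finite (Q (sG s k g))" for g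
      proof -
        assume "g \<in> GG" "rG r k g = GV v"
        then have "g \<in> GE ` A \<union> (Fe v ` {1..m} \<union> Ge v ` {1..\<delta>})" using inV by blast
        then show ?thesis using IHA QZk QX by auto
      qed
      have QC: "finite (Q (GV v)) \<and> card (Q (GV v)) = (\<Sum>g\<in>{g\<in>GG. rG r k g = GV v}. Suc (card (Q (sG s k g))))"
        unfolding Q_def by (rule Qs_card) (use finA fins in \<open>auto simp: inV Q_def\<close>)
      have "(\<Sum>g\<in>{g\<in>GG. rG r k g = GV v}. Suc (card (Q (sG s k g))))
          = (\<Sum>g\<in>GE ` A. Suc (card (Q (sG s k g)))) + ((\<Sum>g\<in>Fe v ` {1..m}. Suc (card (Q (sG s k g))))
             + (\<Sum>g\<in>Ge v ` {1..\<delta>}. Suc (card (Q (sG s k g)))))"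
        unfolding inV using finA by (subst sum.union_disjoint, auto)+
      also have "\<dots> = (\<Sum>e\<in>A. d (s e)) + (m * k + \<delta>)"
      proof -
        have "(\<Sum>g\<in>GE ` A. Suc (card (Q (sG s k g)))) = (\<Sum>e\<in>A. d (s e))"
          by (subst sum.reindex) (auto simp: inj_on_def IHA intro: sum.cong)
        moreover have "(\<Sum>g\<in>Fe v ` {1..m}. Suc (card (Q (sG s k g)))) = m * k"
          using QZk assms(1) by (subst sum.reindex) (auto simp: inj_on_def)
        moreover have "(\<Sum>g\<in>Ge v ` {1..\<delta>}. Suc (card (Q (sG s k g)))) = \<delta>"
          by (subst sum.reindex) (auto simp: inj_on_def QX)
        ultimately show ?thesis by simp
      qed
      finally have cardQ: "card (Q (GV v)) = (\<Sum>e\<in>A. d (s e)) + (m * k + \<delta>)" using QC by simp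
      have split: "(\<Sum>e\<in>{e\<in>E1. r e = v}. d (s e)) = (\<Sum>e\<in>A. d (s e)) + m * k"
      proof (cases "2 \<le> n")
        case True
        have n1: "1 \<le> n - 1" using True by simp
        have eq: "{e\<in>E1. r e = v} = A \<union> Bs"
        proof -
          have "e \<in> A \<union> Bs" if "e \<in> E1" "r e = v" for e
          proof -
            have "s e \<in> W (n - 1)" using edge_level[OF B, of e n] that vW n by auto
            then have "s e \<in> H (n - 1) \<or> s e = y (n - 1)" using Mk[OF n1] by auto
            then show ?thesis using that n1 unfolding A_def Bs_def Hall_def by auto
          qed
          then show ?thesis unfolding A_def Bs_def by auto
        qed
        have disj: "A \<inter> Bs = {}" using yH[OF n1] unfolding A_def Bs_def by auto
        have finB: "finite Bs" using finr[of v] V0[OF n] vW unfolding Bs_def by (auto intro: rev_finite_subset)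
        have "(\<Sum>e\<in>Bs. d (s e)) = card Bs * k" using Mk[OF n1] unfolding Bs_def by simp
        moreover have "card Bs = m"
          using count_paths[OF B True vW, of "y (n - 1)"] Mk[OF n1] True unfolding m_def Bs_def by auto
        ultimately show ?thesis unfolding eq using sum.union_disjoint[OF finA finB disj, of "\<lambda>e. d (s e)"] by simp
      next
        case False
        have E: "{e\<in>E1. r e = v} = {}" using edge_level[OF B, of _ n] vW n False by auto
        moreover then have "A = {}" unfolding A_def by auto
        ultimately show ?thesis using False unfolding m_def by (simp only: E) simp
      qed
      have "d v = Suc ((\<Sum>e\<in>{e\<in>E1. r e = v}. d (s e)) + \<delta>)"
        using propr[OF n v] unfolding \<delta>_def delta_def by simp
      then show "finite (Q (GV v)) \<and> Suc (card (Q (GV v))) = d v"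
        using QC cardQ split by simp
    qed
  qed
  show ?thesis
  proof
    fix v assume "v \<in> Hall H"
    then obtain n where n: "1 \<le> n" "v \<in> H n" unfolding Hall_def by auto
    have "GV v \<in> G0 V0 E1 s r d k H y" using \<open>v \<in> Hall H\<close> by (simp add: G0_def)
    then show "d v = card {\<alpha> \<in> fpaths (G0 V0 E1 s r d k H y) (G1 V0 E1 s r d k H y) (sG s k) (rG r k).
                   path_rng (rG r k) \<alpha> = GV v}"
      using main[of n] n card_fpaths_rng[of GG "sG s k" "rG r k" "GV v" "G0 V0 E1 s r d k H y"]
      unfolding Q_def GG_def by auto
  qed
qed

end
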